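(* Let $F$ be a field of characteristic $0$ and let $E^{can}$ be the Grassmann algebra $E$ with the $\mathbb{Z}$-grading in which every generator $e_i$ has degree $1$ (so the component of degree $n\ge 1$ is spanned by the basis monomials $e_{i_1}\cdots e_{i_n}$, $i_1<\cdots<i_n$, the component of degree $0$ is $F$, and components of negative degree are $0$). Then $T_{\mathbb{Z}}(E^{can})$ is generated, as a $T_{\mathbb{Z}}$-ideal, by the following graded polynomials: $x$ for every variable $x$ with $\alpha(x)<0$; $[x_1,x_2]$ for all variables $x_1,x_2$ such that $\alpha(x_1)$ or $\alpha(x_2)$ is even; $x_1x_2+x_2x_1$ for all variables $x_1,x_2$ with $\alpha(x_1)$ and $\alpha(x_2)$ both odd.
   Context: $L$ is a vector space over $F$ with basis $e_1,e_2,\dots$, and $E$ is the unital Grassmann algebra of $L$: it has basis $1$ and the products $e_{i_1}\cdots e_{i_k}$ with $i_1<\cdots<i_k$, $k\ge1$, with multiplication induced by $e_ie_j=-e_je_i$. $F\langle X|\mathbb{Z}\rangle$ is the free unital associative algebra on $X=\bigcup_{i\in\mathbb{Z}}X_i$, where each $X_i$ is a countably infinite set of variables of degree $i$; $\alpha(x)$ denotes the degree of the variable $x$, and $F\langle X|\mathbb{Z}\rangle$ is $\mathbb{Z}$-graded by the total degree of monomials. A polynomial $f(x_1,\dots,x_r)\in F\langle X|\mathbb{Z}\rangle$ is a $\mathbb{Z}$-graded identity of a $\mathbb{Z}$-graded algebra $A=\oplus_n A_n$ if $f(a_1,\dots,a_r)=0$ whenever $a_j\in A_{\alpha(x_j)}$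 for all $j$; $T_{\mathbb{Z}}(A)$ is the set of these. A $T_{\mathbb{Z}}$-ideal is an ideal of $F\langle X|\mathbb{Z}\rangle$ invariant under all degree-preserving endomorphisms; the $T_{\mathbb{Z}}$-ideal generated by a set $S$ is the smallest one containing $S$. $[a,b]=ab-ba$. *)

theory Defs
  imports Main
begin

text \<open>Variables: a variable is a pair (i, k) : int \<times> nat; it belongs to X_i, i.e. its
  degree alpha is i. Each X_i = {i} \<times> UNIV is countably infinite.\<close>
type_synonym var = "int \<times> nat"

definition alpha :: "var \<Rightarrow> int" where "alpha x = fst x"

text \<open>Free unital associative algebra F<X|Z>: finitely supported coefficient
  functions on words (lists of variables).\<close>
type_synonym 'a fpoly = "var list \<Rightarrow> 'a"

definition polys :: "('a::field) fpoly set" where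
  "polys = {p. finite {w. p w \<noteq> 0}}"

definition pzero :: "('a::field) fpoly" where "pzero = (\<lambda>w. 0)"
definition mono :: "var list \<Rightarrow> ('a::field) fpoly" where
  "mono u = (\<lambda>w. if w = u then 1 else 0)"
definition pone :: "('a::field) fpoly" where "pone = mono []"
definition padd :: "('a::field) fpoly \<Rightarrow> 'a fpoly \<Rightarrow> 'a fpoly" where
  "padd p q = (\<lambda>w. p w + q w)"
definition pdiff :: "('a::field) fpoly \<Rightarrow> 'a fpoly \<Rightarrow> 'a fpoly" where
  "pdiff p q = (\<lambda>w. p w - q w)"
definition pmul :: "('a::field) fpoly \<Rightarrow> 'a fpoly \<Rightarrow> 'a fpoly" where
  "pmul p q = (\<lambda>w. \<Sum>i\<le>length w. p (take i w) * q (drop i w))"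

definition homog :: "int \<Rightarrow> ('a::field) fpoly \<Rightarrow> bool" where
  "homog n p \<longleftrightarrow> p \<in> polys \<and> (\<forall>w. p w \<noteq> 0 \<longrightarrow> sum_list (map alpha w) = n)"

definition pword :: "(var \<Rightarrow> ('a::field) fpoly) \<Rightarrow> var list \<Rightarrow> 'a fpoly" where
  "pword \<psi> w = foldr (\<lambda>x acc. pmul (\<psi> x) acc) w pone"
definition psubst :: "(var \<Rightarrow> ('a::field) fpoly) \<Rightarrow> 'a fpoly \<Rightarrow> 'a fpoly" where
  "psubst \<psi> p = (\<lambda>v. \<Sum>w\<in>{w. p w \<noteq> 0}. p w * pword \<psi> w v)"

definition two_sided_ideal :: "('a::field) fpoly set \<Rightarrow> bool" where
  "two_sided_ideal I \<longleftrightarrow> I \<subseteq> polys \<and> pzero \<in> I \<and>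
     (\<forall>p\<in>I. \<forall>q\<in>I. padd p q \<in> I) \<and>
     (\<forall>p\<in>I. \<forall>q\<in>polys. pmul q p \<in> I \<and> pmul p q \<in> I)"

definition TZ_ideal :: "('a::field) fpoly set \<Rightarrow> bool" where
  "TZ_ideal I \<longleftrightarrow> two_sided_ideal I \<and>
     (\<forall>\<psi>. (\<forall>x. homog (alpha x) (\<psi> x)) \<longrightarrow> (\<forall>p\<in>I. psubst \<psi> p \<in> I))"

definition TZ_generated :: "('a::field) fpoly set \<Rightarrow> 'a fpoly set" where
  "TZ_generated S = \<Inter> {I. TZ_ideal I \<and> S \<subseteq> I}"

text \<open>Grassmann algebra E: element = coefficient function on finite subsets of nat
  (the set {i1<...<ik} stands for the basis monomial e_i1...e_ik), finitely supported.\<close>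
type_synonym 'a grass = "nat set \<Rightarrow> 'a"

definition gelems :: "('a::field) grass set" where
  "gelems = {a. finite {S. a S \<noteq> 0} \<and> (\<forall>S. a S \<noteq> 0 \<longrightarrow> finite S)}"

definition gsign :: "nat set \<Rightarrow> nat set \<Rightarrow> 'a::field" where
  "gsign T U = (-1) ^ card {(t, u). t \<in> T \<and> u \<in> U \<and> u < t}"

definition gone :: "('a::field) grass" where
  "gone = (\<lambda>S. if S = {} then 1 else 0)"

definition gmul :: "('a::field) grass \<Rightarrow> 'a grass \<Rightarrow> 'a grass" where
  "gmul a b = (\<lambda>S. if finite S then (\<Sum>T\<in>Pow S. gsign T (S - T) * a T * b (S - T)) else 0)"

definition Ecan :: "int \<Rightarrow> ('a::field) grass set" where
  "Ecan n = {a \<in> gelems. \<forall>S. a S \<noteq> 0 \<longrightarrow> int (card S) = n}"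

definition gword :: "(var \<Rightarrow> ('a::field) grass) \<Rightarrow> var list \<Rightarrow> 'a grass" where
  "gword \<phi> w = foldr (\<lambda>x acc. gmul (\<phi> x) acc) w gone"

definition evalE :: "('a::field) fpoly \<Rightarrow> (var \<Rightarrow> 'a grass) \<Rightarrow> 'a grass" where
  "evalE p \<phi> = (\<lambda>S. \<Sum>w\<in>{w. p w \<noteq> 0}. p w * gword \<phi> w S)"

definition TZ_Ecan :: "('a::field) fpoly set" where
  "TZ_Ecan = {p \<in> polys. \<forall>\<phi>. (\<forall>x. \<phi> x \<in> Ecan (alpha x)) \<longrightarrow> evalE p \<phi> = (\<lambda>S. 0)}"

definition gens_Ecan :: "('a::field) fpoly set" where
  "gens_Ecan =
     {mono [x] | x. alpha x < 0}
   \<union> {pdiff (mono [x1, x2]) (mono [x2, x1]) | x1 x2. even (alpha x1) \<or> even (alpha x2)}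
   \<union> {padd (mono [x1, x2]) (mono [x2, x1]) | x1 x2. odd (alpha x1) \<and> odd (alpha x2)}"

end

theory Submission
  imports Defs "HOL-Computational_Algebra.Polynomial" "HOL-Library.Multiset"
    "HOL-Library.Countable" "HOL-Library.Product_Lexorder"
begin

definition gb :: "nat set \<Rightarrow> ('a::field) grass" where
  "gb T = (\<lambda>S. if S = T then 1 else 0)"
definition gsc :: "'a \<Rightarrow> ('a::field) grass \<Rightarrow> 'a grass" where
  "gsc c a = (\<lambda>S. c * a S)"

lemma gmul_sum_left:
  "gmul (\<lambda>S. \<Sum>i\<in>I. f i S) b = (\<lambda>S. \<Sum>i\<in>I. gmul (f i) b S)"
  unfolding gmul_def
  by (auto simp: fun_eq_iff sum_distrib_left sum_distrib_right mult.assoc intro: sum.swap)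

lemma gmul_sum_right:
  "gmul b (\<lambda>S. \<Sum>i\<in>I. f i S) = (\<lambda>S. \<Sum>i\<in>I. gmul b (f i) S)"
  unfolding gmul_def
  by (auto simp: fun_eq_iff sum_distrib_left sum_distrib_right mult.assoc intro: sum.swap)

lemma gmul_add_left: "gmul (\<lambda>S. a S + b S) c = (\<lambda>S. gmul a c S + gmul b c S)"
  unfolding gmul_def by (auto simp: fun_eq_iff algebra_simps sum.distrib)
lemma gmul_add_right: "gmul c (\<lambda>S. a S + b S) = (\<lambda>S. gmul c a S + gmul c b S)"
  unfolding gmul_def by (auto simp: fun_eq_iff algebra_simps sum.distrib)
lemma gmul_sc_left: "gmul (gsc k a) c = gsc k (gmul a c)"
  unfolding gmul_def gsc_def by (auto simp: fun_eq_iff algebra_simps sum_distrib_left)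
lemma gmul_sc_right: "gmul c (gsc k a) = gsc k (gmul c a)"
  unfolding gmul_def gsc_def by (auto simp: fun_eq_iff algebra_simps sum_distrib_left)
lemma gmul_zero_left[simp]: "gmul (\<lambda>S. 0) c = (\<lambda>S. 0)"
  unfolding gmul_def by auto
lemma gmul_zero_right[simp]: "gmul c (\<lambda>S. 0) = (\<lambda>S. 0)"
  unfolding gmul_def by auto

lemma gmul_gb:
  assumes "finite T" "finite U"
  shows "gmul (gb T) (gb U) = (\<lambda>S. if T \<inter> U = {} \<and> S = T \<union> U then gsign T U else 0)"
proof
  fix S
  show "gmul (gb T) (gb U) S = (if T \<inter> U = {} \<and> S = T \<union> U then gsign T U else 0)"
  proof (cases "finite S")
    case True
    have "gmul (gb T) (gb U) S = (\<Sum>X\<in>Pow S. gsign X (S - X) * gb T X * gb U (S - X))"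
      using True by (simp add: gmul_def)
    also have "\<dots> = (\<Sum>X\<in>Pow S. if X = T then (if S - X = U then gsign X (S - X) else 0) else 0)"
      by (rule sum.cong) (auto simp: gb_def)
    also have "\<dots> = (if T \<in> Pow S then (if S - T = U then gsign T (S - T) else 0) else 0)"
      using True by (subst sum.delta) auto
    also have "\<dots> = (if T \<inter> U = {} \<and> S = T \<union> U then gsign T U else 0)"
      by auto
    finally show ?thesis .
  next
    case False
    then show ?thesis using assms unfolding gmul_def by auto
  qed
qed

lemma gsign_nz[simp]: "(gsign T U :: 'a::field) \<noteq> 0"
  unfolding gsign_def by simp

lemma gsign_sq: "(gsign T U :: 'a::field) * gsign T U = 1"
  unfolding gsign_def by (simp add: power_mult_distrib[symmetric])

lemma inv_finite: "finite T \<Longrightarrow> finite U \<Longrightarrow> finite {(t, u). t \<in> T \<and> u \<in> U \<and> u < t}"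
  by (rule finite_subset[of _ "T \<times> U"]) auto

lemma gsign_union_left:
  assumes "finite T" "finite U" "finite V" "T \<inter> U = {}"
  shows "(gsign (T \<union> U) V :: 'a::field) = gsign T V * gsign U V"
proof -
  have "{(t, u). t \<in> T \<union> U \<and> u \<in> V \<and> u < t} =
        {(t, u). t \<in> T \<and> u \<in> V \<and> u < t} \<union> {(t, u). t \<in> U \<and> u \<in> V \<and> u < t}" by auto
  moreover have "card \<dots> = card {(t, u). t \<in> T \<and> u \<in> V \<and> u < t} + card {(t, u). t \<in> U \<and> u \<in> V \<and> u < t}"
    using assms by (intro card_Un_disjoint inv_finite) auto
  ultimately show ?thesis unfolding gsign_def by (simp add: power_add)
qed

lemma gsign_union_right:
  assumes "finite T" "finite U" "finite V" "U \<inter> V = {}"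
  shows "(gsign T (U \<union> V) :: 'a::field) = gsign T U * gsign T V"
proof -
  have "{(t, u). t \<in> T \<and> u \<in> U \<union> V \<and> u < t} =
        {(t, u). t \<in> T \<and> u \<in> U \<and> u < t} \<union> {(t, u). t \<in> T \<and> u \<in> V \<and> u < t}" by auto
  moreover have "card \<dots> = card {(t, u). t \<in> T \<and> u \<in> U \<and> u < t} + card {(t, u). t \<in> T \<and> u \<in> V \<and> u < t}"
    using assms by (intro card_Un_disjoint inv_finite) auto
  ultimately show ?thesis unfolding gsign_def by (simp add: power_add)
qed

lemma gsign_swap:
  assumes "finite T" "finite U" "T \<inter> U = {}"
  shows "(gsign T U :: 'a::field) * gsign U T = (-1) ^ (card T * card U)"
proof -
  have "T \<times> U = {(t, u). t \<in> T \<and> u \<in> U \<and> u < t} \<union> (\<lambda>(u,t). (t,u)) ` {(u, t). u \<in> U \<and> t \<in> T \<and> t < u}"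
    using assms by (auto simp: image_iff)
  moreover have "card \<dots> = card {(t, u). t \<in> T \<and> u \<in> U \<and> u < t} + card ((\<lambda>(u,t). (t,u)) ` {(u, t). u \<in> U \<and> t \<in> T \<and> t < u})"
    using assms by (intro card_Un_disjoint inv_finite finite_imageI) auto
  moreover have "card ((\<lambda>(u,t). (t,u)) ` {(u, t). u \<in> U \<and> t \<in> T \<and> t < u}) = card {(u, t). u \<in> U \<and> t \<in> T \<and> t < u}"
    by (intro card_image) (auto simp: inj_on_def)
  ultimately have "card (T \<times> U) = card {(t, u). t \<in> T \<and> u \<in> U \<and> u < t} + card {(u, t). u \<in> U \<and> t \<in> T \<and> t < u}"
    by simp
  then show ?thesis unfolding gsign_def by (simp add: power_add card_cartesian_product)
qed

lemma gmul_gb':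
  assumes "finite T" "finite U"
  shows "gmul (gb T) (gb U) = (if T \<inter> U = {} then gsc (gsign T U) (gb (T \<union> U)) else (\<lambda>S. 0))"
  unfolding gmul_gb[OF assms] by (auto simp: fun_eq_iff gsc_def gb_def)

lemma gsc_zero[simp]: "gsc c (\<lambda>S. 0) = (\<lambda>S. 0)"
  by (simp add: gsc_def)

lemma gb_assoc:
  assumes "finite T" "finite U" "finite V"
  shows "gmul (gmul (gb T) (gb U)) (gb V) = (gmul (gb T) (gmul (gb U) (gb V)) :: ('a::field) grass)"
proof (cases "T \<inter> U = {} \<and> U \<inter> V = {} \<and> T \<inter> V = {}")
  case True
  have "gmul (gmul (gb T) (gb U)) (gb V) = gsc (gsign T U * gsign (T \<union> U) V) (gb (T \<union> U \<union> V) :: 'a grass)"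
    using True assms by (simp add: gmul_gb' gmul_sc_left Int_Un_distrib2) (simp add: gsc_def fun_eq_iff)
  moreover have "gmul (gb T) (gmul (gb U) (gb V)) = gsc (gsign U V * gsign T (U \<union> V)) (gb (T \<union> (U \<union> V)) :: 'a grass)"
    using True assms by (simp add: gmul_gb' gmul_sc_right Int_Un_distrib) (simp add: gsc_def fun_eq_iff)
  moreover have "(gsign T U * gsign (T \<union> U) V :: 'a) = gsign U V * gsign T (U \<union> V)"
    using True assms by (simp add: gsign_union_left gsign_union_right)
  ultimately show ?thesis by (simp add: Un_assoc)
next
  case False
  then show ?thesis using assms
    by (auto simp: gmul_gb' gmul_sc_left gmul_sc_right Int_Un_distrib Int_Un_distrib2 gsc_zero)
qed

definition gsupp :: "('a::field) grass \<Rightarrow> nat set set" where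
  "gsupp a = {S. a S \<noteq> 0}"

lemma gexpand:
  assumes "a \<in> gelems"
  shows "a = (\<lambda>S. \<Sum>T\<in>gsupp a. gsc (a T) (gb T) S)"
proof
  fix S
  have fin: "finite (gsupp a)" using assms by (simp add: gelems_def gsupp_def)
  show "a S = (\<Sum>T\<in>gsupp a. gsc (a T) (gb T) S)"
  proof (cases "S \<in> gsupp a")
    case True
    have "(\<Sum>T\<in>gsupp a. gsc (a T) (gb T) S) = (\<Sum>T\<in>gsupp a. if S = T then a T else 0)"
      by (rule sum.cong) (auto simp: gsc_def gb_def)
    then show ?thesis using fin True by (simp add: sum.delta)
  next
    case False
    then have "(\<Sum>T\<in>gsupp a. gsc (a T) (gb T) S) = 0"
      by (intro sum.neutral) (auto simp: gsc_def gb_def)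
    then show ?thesis using False by (simp add: gsupp_def)
  qed
qed

lemma gsupp_fin: "a \<in> gelems \<Longrightarrow> T \<in> gsupp a \<Longrightarrow> finite T"
  by (auto simp: gelems_def gsupp_def)

lemma gsc_gsc: "gsc c (gsc d a) = gsc (c * d) a"
  by (simp add: gsc_def mult.assoc)

lemma gmul_assoc:
  assumes "a \<in> gelems" "b \<in> gelems" "c \<in> gelems"
  shows "gmul (gmul a b) c = gmul a (gmul b c)"
proof -
  have e: "gmul (gmul (gsc (a T) (gb T)) (gsc (b U) (gb U))) (gsc (c V) (gb V)) =
           gmul (gsc (a T) (gb T)) (gmul (gsc (b U) (gb U)) (gsc (c V) (gb V)))"
    if "T \<in> gsupp a" "U \<in> gsupp b" "V \<in> gsupp c" for T U V
  proof -
    have fin: "finite T" "finite U" "finite V"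
      using gsupp_fin[OF assms(1) that(1)] gsupp_fin[OF assms(2) that(2)] gsupp_fin[OF assms(3) that(3)] by auto
    show ?thesis by (simp add: gmul_sc_left gmul_sc_right gsc_gsc gb_assoc[OF fin] ac_simps)
  qed
  have L: "gmul (gmul a b) c = (\<lambda>S. \<Sum>T\<in>gsupp a. \<Sum>U\<in>gsupp b. \<Sum>V\<in>gsupp c.
      gmul (gmul (gsc (a T) (gb T)) (gsc (b U) (gb U))) (gsc (c V) (gb V)) S)"
    apply (subst gexpand[OF assms(1)], subst gexpand[OF assms(2)], subst gexpand[OF assms(3)])
    apply (simp add: gmul_sum_left gmul_sum_right)
    done
  have R: "gmul a (gmul b c) = (\<lambda>S. \<Sum>T\<in>gsupp a. \<Sum>U\<in>gsupp b. \<Sum>V\<in>gsupp c.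
      gmul (gsc (a T) (gb T)) (gmul (gsc (b U) (gb U)) (gsc (c V) (gb V))) S)"
    apply (subst gexpand[OF assms(1)], subst gexpand[OF assms(2)], subst gexpand[OF assms(3)])
    apply (simp add: gmul_sum_left gmul_sum_right)
    done
  show ?thesis unfolding L R using e by simp
qed

lemma gsign_empty_right[simp]: "gsign S {} = 1" and gsign_empty_left[simp]: "gsign {} S = 1"
  by (simp_all add: gsign_def)

lemma gmul_gone_right:
  assumes "a \<in> gelems" shows "gmul a gone = a"
proof
  fix S
  show "gmul a gone S = a S"
  proof (cases "finite S")
    case True
    have "gmul a gone S = (\<Sum>T\<in>Pow S. gsign T (S - T) * a T * gone (S - T))"
      using True by (simp add: gmul_def)
    also have "\<dots> = (\<Sum>T\<in>Pow S. if T = S then a T else 0)"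
      by (rule sum.cong) (auto simp: gone_def)
    also have "\<dots> = a S" using True by (simp add: sum.delta)
    finally show ?thesis .
  next
    case False
    then show ?thesis using assms by (auto simp: gmul_def gelems_def)
  qed
qed

lemma gmul_gone_left:
  assumes "a \<in> gelems" shows "gmul gone a = a"
proof
  fix S
  show "gmul gone a S = a S"
  proof (cases "finite S")
    case True
    have "gmul gone a S = (\<Sum>T\<in>Pow S. gsign T (S - T) * gone T * a (S - T))"
      using True by (simp add: gmul_def)
    also have "\<dots> = (\<Sum>T\<in>Pow S. if T = {} then a (S - T) else 0)"
      by (rule sum.cong) (auto simp: gone_def)
    also have "\<dots> = a S" using True by (simp add: sum.delta)
    finally show ?thesis .
  next
    case False
    then show ?thesis using assms by (auto simp: gmul_def gelems_def)
  qed
qed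

lemma Ecan_gelems: "a \<in> Ecan n \<Longrightarrow> a \<in> gelems"
  by (simp add: Ecan_def)

lemma Ecan_zero[simp]: "(\<lambda>S. 0) \<in> Ecan n"
  by (simp add: Ecan_def gelems_def)

lemma Ecan_add: "a \<in> Ecan n \<Longrightarrow> b \<in> Ecan n \<Longrightarrow> (\<lambda>S. a S + b S) \<in> Ecan n"
proof -
  assume a: "a \<in> Ecan n" and b: "b \<in> Ecan n"
  have "finite {S. a S + b S \<noteq> 0}"
    by (rule finite_subset[of _ "{S. a S \<noteq> 0} \<union> {S. b S \<noteq> 0}"]) (use a b in \<open>auto simp: Ecan_def gelems_def\<close>)
  moreover have "a S \<noteq> 0 \<or> b S \<noteq> 0" if "a S + b S \<noteq> 0" for S using that by auto
  ultimately show ?thesis using a b unfolding Ecan_def gelems_def by blast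
qed

lemma Ecan_sc: "a \<in> Ecan n \<Longrightarrow> gsc c a \<in> Ecan n"
  unfolding Ecan_def gelems_def gsc_def
  by (auto elim!: finite_subset[rotated])

lemma Ecan_sum: "(\<And>i. i \<in> I \<Longrightarrow> f i \<in> Ecan n) \<Longrightarrow> (\<lambda>S. \<Sum>i\<in>I. f i S) \<in> Ecan n"
proof (induction I rule: infinite_finite_induct)
  case (insert x F)
  then show ?case using Ecan_add[of "f x" n "\<lambda>S. \<Sum>i\<in>F. f i S"] by simp
qed simp_all

lemma gb_Ecan: "finite T \<Longrightarrow> gb T \<in> Ecan (int (card T))"
  by (auto simp: Ecan_def gelems_def gb_def)

lemma gone_Ecan: "gone \<in> Ecan 0"
  by (auto simp: Ecan_def gelems_def gone_def)

lemma gone_gb: "gone = gb {}"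
  by (simp add: gone_def gb_def)

lemma Ecan_neg: "a \<in> Ecan n \<Longrightarrow> n < 0 \<Longrightarrow> a = (\<lambda>S. 0)"
  by (force simp: Ecan_def)

lemma gmul_nz:
  assumes "gmul a b S \<noteq> 0"
  shows "finite S \<and> (\<exists>T. T \<subseteq> S \<and> a T \<noteq> 0 \<and> b (S - T) \<noteq> 0)"
proof -
  have fS: "finite S" using assms by (auto simp: gmul_def split: if_splits)
  then have "(\<Sum>T\<in>Pow S. gsign T (S - T) * a T * b (S - T)) \<noteq> 0" using assms by (simp add: gmul_def)
  then obtain T where "T \<in> Pow S" "gsign T (S - T) * a T * b (S - T) \<noteq> 0"
    using sum.not_neutral_contains_not_neutral by blast
  then show ?thesis using fS by auto
qed

lemma gmul_Ecan:
  assumes a: "a \<in> Ecan m" and b: "b \<in> Ecan n"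
  shows "gmul a b \<in> Ecan (m + n)"
proof -
  have sub: "{S. gmul a b S \<noteq> 0} \<subseteq> (\<lambda>(T, U). T \<union> U) ` ({T. a T \<noteq> 0} \<times> {U. b U \<noteq> 0})"
  proof
    fix S assume "S \<in> {S. gmul a b S \<noteq> 0}"
    then obtain T where "T \<subseteq> S" "a T \<noteq> 0" "b (S - T) \<noteq> 0" using gmul_nz by blast
    then show "S \<in> (\<lambda>(T, U). T \<union> U) ` ({T. a T \<noteq> 0} \<times> {U. b U \<noteq> 0})"
      by (intro image_eqI[of _ _ "(T, S - T)"]) auto
  qed
  have "finite {S. gmul a b S \<noteq> 0}"
    using a b by (intro finite_subset[OF sub]) (auto simp: Ecan_def gelems_def)
  moreover have "finite S \<and> int (card S) = m + n" if nz: "gmul a b S \<noteq> 0" for S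
  proof -
    obtain T where T: "finite S" "T \<subseteq> S" "a T \<noteq> 0" "b (S - T) \<noteq> 0" using gmul_nz[OF nz] by blast
    have "card S = card T + card (S - T)"
      using T by (metis card_Diff_subset card_mono diff_add_inverse le_add_diff_inverse finite_subset)
    then show ?thesis using T a b by (auto simp: Ecan_def)
  qed
  ultimately show ?thesis by (auto simp: Ecan_def gelems_def)
qed

lemma gb_comm:
  assumes "finite T" "finite U"
  shows "gmul (gb T) (gb U) = gsc ((-1) ^ (card T * card U)) (gmul (gb U) (gb T) :: ('a::field) grass)"
proof (cases "T \<inter> U = {}")
  case True
  have "(gsign T U :: 'a) = gsign T U * (gsign U T * gsign U T)" by (simp add: gsign_sq)
  also have "\<dots> = (-1) ^ (card T * card U) * gsign U T" using gsign_swap[OF assms True]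
    by (simp add: mult.assoc[symmetric])
  finally show ?thesis using True assms by (simp add: gmul_gb' gsc_gsc Un_commute Int_commute)
next
  case False
  then show ?thesis using assms by (simp add: gmul_gb' Int_commute)
qed

lemma gmul_comm:
  assumes a: "a \<in> Ecan (int m)" and b: "b \<in> Ecan (int n)"
  shows "gmul a b = gsc ((-1) ^ (m * n)) (gmul b a)"
proof -
  have ga: "a \<in> gelems" and gb': "b \<in> gelems" using a b by (auto simp: Ecan_def)
  have e: "gmul (gsc (a T) (gb T)) (gsc (b U) (gb U)) = gsc ((-1) ^ (m * n)) (gmul (gsc (b U) (gb U)) (gsc (a T) (gb T)))"
    if "T \<in> gsupp a" "U \<in> gsupp b" for T U
  proof -
    have "finite T" "finite U" "card T = m" "card U = n"
      using that a b by (auto simp: Ecan_def gelems_def gsupp_def)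
    then show ?thesis by (simp add: gmul_sc_left gmul_sc_right gsc_gsc gb_comm[of T U] ac_simps)
  qed
  have "gmul a b = (\<lambda>S. \<Sum>T\<in>gsupp a. \<Sum>U\<in>gsupp b. gmul (gsc (a T) (gb T)) (gsc (b U) (gb U)) S)"
    apply (subst gexpand[OF ga], subst gexpand[OF gb'])
    apply (simp add: gmul_sum_left gmul_sum_right)
    done
  also have "\<dots> = (\<lambda>S. \<Sum>T\<in>gsupp a. \<Sum>U\<in>gsupp b. (-1) ^ (m * n) * gmul (gsc (b U) (gb U)) (gsc (a T) (gb T)) S)"
    using e by (simp add: gsc_def)
  also have "\<dots> = gsc ((-1) ^ (m * n)) (\<lambda>S. \<Sum>U\<in>gsupp b. \<Sum>T\<in>gsupp a. gmul (gsc (b U) (gb U)) (gsc (a T) (gb T)) S)"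
    unfolding gsc_def by (simp add: sum_distrib_left) (rule ext, rule sum.swap)
  also have "(\<lambda>S. \<Sum>U\<in>gsupp b. \<Sum>T\<in>gsupp a. gmul (gsc (b U) (gb U)) (gsc (a T) (gb T)) S) = gmul b a"
    apply (subst (3) gexpand[OF ga], subst (3) gexpand[OF gb'])
    apply (simp add: gmul_sum_left gmul_sum_right)
    done
  finally show ?thesis .
qed


definition psc :: "'a \<Rightarrow> ('a::field) fpoly \<Rightarrow> 'a fpoly" where
  "psc c p = (\<lambda>w. c * p w)"

definition psupp :: "('a::field) fpoly \<Rightarrow> var list set" where
  "psupp p = {w. p w \<noteq> 0}"

lemma polys_iff: "p \<in> polys \<longleftrightarrow> finite (psupp p)"
  by (simp add: polys_def psupp_def)

lemma mono_polys[simp]: "mono u \<in> polys"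
  unfolding polys_def mem_Collect_eq by (rule finite_subset[of _ "{u}"]) (auto simp: mono_def)

lemma pzero_polys[simp]: "pzero \<in> polys" and zero_polys[simp]: "(\<lambda>w. 0) \<in> polys"
  by (simp_all add: polys_def pzero_def)

lemma pone_polys[simp]: "pone \<in> polys"
  by (simp add: pone_def)

lemma padd_polys[simp]: "p \<in> polys \<Longrightarrow> q \<in> polys \<Longrightarrow> padd p q \<in> polys"
  unfolding polys_def padd_def mem_Collect_eq
  by (rule finite_subset[of _ "{w. p w \<noteq> 0} \<union> {w. q w \<noteq> 0}"]) auto

lemma pdiff_polys[simp]: "p \<in> polys \<Longrightarrow> q \<in> polys \<Longrightarrow> pdiff p q \<in> polys"
  unfolding polys_def pdiff_def mem_Collect_eq
  by (rule finite_subset[of _ "{w. p w \<noteq> 0} \<union> {w. q w \<noteq> 0}"]) auto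

lemma psc_polys[simp]: "p \<in> polys \<Longrightarrow> psc c p \<in> polys"
  unfolding polys_def psc_def mem_Collect_eq
  by (rule finite_subset[of _ "{w. p w \<noteq> 0}"]) auto

lemma sum_polys: "(\<And>i. i \<in> I \<Longrightarrow> f i \<in> polys) \<Longrightarrow> (\<lambda>w. \<Sum>i\<in>I. f i w) \<in> polys"
proof (induction I rule: infinite_finite_induct)
  case (insert x F)
  then have "padd (f x) (\<lambda>w. \<Sum>i\<in>F. f i w) \<in> polys" by simp
  then show ?case using insert by (simp add: padd_def)
qed simp_all

lemma pmul_polys[simp]:
  assumes "p \<in> polys" "q \<in> polys" shows "pmul p q \<in> polys"
proof -
  have "{w. pmul p q w \<noteq> 0} \<subseteq> (\<lambda>(u, v). u @ v) ` ({w. p w \<noteq> 0} \<times> {w. q w \<noteq> 0})"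
  proof
    fix w assume "w \<in> {w. pmul p q w \<noteq> 0}"
    then have "(\<Sum>i\<le>length w. p (take i w) * q (drop i w)) \<noteq> 0" by (simp add: pmul_def)
    then obtain i where "p (take i w) * q (drop i w) \<noteq> 0"
      using sum.not_neutral_contains_not_neutral by blast
    then show "w \<in> (\<lambda>(u, v). u @ v) ` ({w. p w \<noteq> 0} \<times> {w. q w \<noteq> 0})"
      by (intro image_eqI[of _ _ "(take i w, drop i w)"]) auto
  qed
  then show ?thesis using assms unfolding polys_def mem_Collect_eq
    by (meson finite_SigmaI finite_imageI finite_subset)
qed

lemma take_drop_iff:
  assumes "i \<le> length w"
  shows "(take i w = u \<and> drop i w = v) \<longleftrightarrow> (i = length u \<and> w = u @ v)"
proof
  assume h: "take i w = u \<and> drop i w = v"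
  then have "w = u @ v" by (metis append_take_drop_id)
  moreover have "length u = i" using h assms by auto
  ultimately show "i = length u \<and> w = u @ v" by simp
next
  assume "i = length u \<and> w = u @ v"
  then show "take i w = u \<and> drop i w = v" by simp
qed

lemma pmul_mono: "pmul (mono u) (mono v) = mono (u @ v)"
proof
  fix w
  have "pmul (mono u) (mono v) w = (\<Sum>i\<le>length w. if i = length u \<and> w = u @ v then 1 else 0)"
    unfolding pmul_def
  proof (rule sum.cong)
    fix i assume "i \<in> {..length w}"
    then have "i \<le> length w" by simp
    note iff = take_drop_iff[OF this, of u v]
    have "mono u (take i w) * mono v (drop i w) = (if take i w = u \<and> drop i w = v then 1 else 0)"
      by (simp add: mono_def)
    also have "\<dots> = (if i = length u \<and> w = u @ v then 1 else 0)" using iff by simp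
    finally show "mono u (take i w) * mono v (drop i w) =
      (if i = length u \<and> w = u @ v then 1 else 0)" .
  qed simp
  also have "\<dots> = mono (u @ v) w" by (cases "w = u @ v") (simp_all add: mono_def)
  finally show "pmul (mono u) (mono v) w = mono (u @ v) w" .
qed

lemma pmul_sum_left: "pmul (\<lambda>w. \<Sum>i\<in>I. f i w) q = (\<lambda>w. \<Sum>i\<in>I. pmul (f i) q w)"
  unfolding pmul_def by (auto simp: fun_eq_iff sum_distrib_right intro: sum.swap)
lemma pmul_sum_right: "pmul q (\<lambda>w. \<Sum>i\<in>I. f i w) = (\<lambda>w. \<Sum>i\<in>I. pmul q (f i) w)"
  unfolding pmul_def by (auto simp: fun_eq_iff sum_distrib_left intro: sum.swap)
lemma pmul_sc_left: "pmul (psc c p) q = psc c (pmul p q)"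
  unfolding pmul_def psc_def by (auto simp: fun_eq_iff sum_distrib_left mult.assoc)
lemma pmul_sc_right: "pmul q (psc c p) = psc c (pmul q p)"
  unfolding pmul_def psc_def by (auto simp: fun_eq_iff sum_distrib_left ac_simps)
lemma pmul_diff_right: "pmul q (pdiff a b) = pdiff (pmul q a) (pmul q b)"
  unfolding pmul_def pdiff_def by (auto simp: fun_eq_iff sum_subtractf algebra_simps)
lemma pmul_diff_left: "pmul (pdiff a b) q = pdiff (pmul a q) (pmul b q)"
  unfolding pmul_def pdiff_def by (auto simp: fun_eq_iff sum_subtractf algebra_simps)
lemma pmul_add_right: "pmul q (padd a b) = padd (pmul q a) (pmul q b)"
  unfolding pmul_def padd_def by (auto simp: fun_eq_iff sum.distrib algebra_simps)
lemma pmul_add_left: "pmul (padd a b) q = padd (pmul a q) (pmul b q)"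
  unfolding pmul_def padd_def by (auto simp: fun_eq_iff sum.distrib algebra_simps)

lemma pexpand:
  assumes "finite W" "psupp p \<subseteq> W"
  shows "p = (\<lambda>v. \<Sum>w\<in>W. psc (p w) (mono w) v)"
proof
  fix v
  show "p v = (\<Sum>w\<in>W. psc (p w) (mono w) v)"
  proof (cases "v \<in> W")
    case True
    have "(\<Sum>w\<in>W. psc (p w) (mono w) v) = (\<Sum>w\<in>W. if w = v then p w else 0)"
      by (rule sum.cong) (auto simp: psc_def mono_def)
    then show ?thesis using True assms by simp
  next
    case False
    then have "(\<Sum>w\<in>W. psc (p w) (mono w) v) = 0"
      by (intro sum.neutral) (auto simp: psc_def mono_def)
    then show ?thesis using False assms by (auto simp: psupp_def)
  qed
qed

definition adm :: "(var \<Rightarrow> ('a::field) grass) \<Rightarrow> bool" where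
  "adm \<phi> \<longleftrightarrow> (\<forall>x. \<phi> x \<in> Ecan (alpha x))"

lemma adm_D: "adm \<phi> \<Longrightarrow> \<phi> x \<in> Ecan (alpha x)"
  unfolding adm_def by blast

lemma evalE_W:
  assumes "finite W" "psupp p \<subseteq> W"
  shows "evalE p \<phi> = (\<lambda>S. \<Sum>w\<in>W. p w * gword \<phi> w S)"
  unfolding evalE_def
  by (rule ext, rule sum.mono_neutral_left) (use assms in \<open>auto simp: psupp_def\<close>)

lemma evalE_sum:
  assumes "finite I" "\<And>i. i \<in> I \<Longrightarrow> f i \<in> polys"
  shows "evalE (\<lambda>w. \<Sum>i\<in>I. f i w) \<phi> = (\<lambda>S. \<Sum>i\<in>I. evalE (f i) \<phi> S)"
proof -
  define W where "W = (\<Union>i\<in>I. psupp (f i))"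
  have fW: "finite W" using assms by (auto simp: W_def polys_iff)
  have s1: "psupp (\<lambda>w. \<Sum>i\<in>I. f i w) \<subseteq> W"
    by (auto simp: W_def psupp_def dest: sum.not_neutral_contains_not_neutral)
  have "evalE (\<lambda>w. \<Sum>i\<in>I. f i w) \<phi> = (\<lambda>S. \<Sum>w\<in>W. (\<Sum>i\<in>I. f i w) * gword \<phi> w S)"
    by (rule evalE_W[OF fW s1])
  also have "\<dots> = (\<lambda>S. \<Sum>i\<in>I. \<Sum>w\<in>W. f i w * gword \<phi> w S)"
    by (simp add: sum_distrib_right) (rule ext, rule sum.swap)
  also have "\<dots> = (\<lambda>S. \<Sum>i\<in>I. evalE (f i) \<phi> S)"
    by (rule ext, rule sum.cong, simp) (subst evalE_W[OF fW], auto simp: W_def)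
  finally show ?thesis .
qed

lemma evalE_mono: "evalE (mono u) \<phi> = gword \<phi> u"
proof -
  have "evalE (mono u) \<phi> = (\<lambda>S. \<Sum>w\<in>{u}. mono u w * gword \<phi> w S)"
    by (rule evalE_W) (auto simp: psupp_def mono_def split: if_splits)
  then show ?thesis by (simp add: mono_def)
qed

lemma evalE_psc: "p \<in> polys \<Longrightarrow> evalE (psc c p) \<phi> = gsc c (evalE p \<phi>)"
  apply (subst evalE_W[of "psupp p"], simp add: polys_iff, force simp: psupp_def psc_def)
  apply (subst evalE_W[of "psupp p"], simp add: polys_iff, simp)
  apply (simp add: gsc_def psc_def sum_distrib_left mult.assoc)
  done

lemma evalE_padd: "p \<in> polys \<Longrightarrow> q \<in> polys \<Longrightarrow> evalE (padd p q) \<phi> = (\<lambda>S. evalE p \<phi> S + evalE q \<phi> S)"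
  using evalE_sum[of "{True, False}" "\<lambda>b. if b then p else q" \<phi>]
  by (simp add: padd_def)

lemma evalE_pdiff: "p \<in> polys \<Longrightarrow> q \<in> polys \<Longrightarrow> evalE (pdiff p q) \<phi> = (\<lambda>S. evalE p \<phi> S - evalE q \<phi> S)"
proof -
  assume p: "p \<in> polys" and q: "q \<in> polys"
  have "pdiff p q = padd p (psc (-1) q)" by (simp add: pdiff_def padd_def psc_def fun_eq_iff)
  then show ?thesis using p q by (simp add: evalE_padd evalE_psc gsc_def)
qed

lemma gword_Ecan: "adm \<phi> \<Longrightarrow> gword \<phi> w \<in> Ecan (sum_list (map alpha w))"
  by (induction w) (auto simp: gword_def adm_def gone_Ecan intro: gmul_Ecan)

lemma gword_append: "adm \<phi> \<Longrightarrow> gword \<phi> (u @ v) = gmul (gword \<phi> u) (gword \<phi> v)"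
proof (induction u)
  case Nil
  then show ?case using gword_Ecan[of \<phi> v] by (simp add: gword_def gmul_gone_left Ecan_gelems)
next
  case (Cons x u)
  have "gword \<phi> ((x # u) @ v) = gmul (\<phi> x) (gmul (gword \<phi> u) (gword \<phi> v))"
    using Cons by (simp add: gword_def)
  also have "\<dots> = gmul (gmul (\<phi> x) (gword \<phi> u)) (gword \<phi> v)"
    using Cons.prems gword_Ecan[OF Cons.prems] by (intro gmul_assoc[symmetric]) (auto intro: Ecan_gelems adm_D)
  finally show ?case by (simp add: gword_def)
qed

lemma evalE_pmul:
  assumes p: "p \<in> polys" and q: "q \<in> polys" and a: "adm \<phi>"
  shows "evalE (pmul p q) \<phi> = gmul (evalE p \<phi>) (evalE q \<phi>)"
proof -
  have fp: "finite (psupp p)" and fq: "finite (psupp q)" using p q by (simp_all add: polys_iff)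
  have "pmul p q = pmul (\<lambda>v. \<Sum>u\<in>psupp p. psc (p u) (mono u) v) (\<lambda>v. \<Sum>w\<in>psupp q. psc (q w) (mono w) v)"
    using pexpand[OF fp subset_refl] pexpand[OF fq subset_refl] by auto
  also have "\<dots> = (\<lambda>v. \<Sum>u\<in>psupp p. \<Sum>w\<in>psupp q. psc (p u * q w) (mono (u @ w)) v)"
    by (simp add: pmul_sum_left pmul_sum_right pmul_sc_left pmul_sc_right pmul_mono)
      (simp add: psc_def ac_simps)
  finally have e: "pmul p q = \<dots>" .
  have "evalE (pmul p q) \<phi> = (\<lambda>S. \<Sum>u\<in>psupp p. \<Sum>w\<in>psupp q. gsc (p u * q w) (gword \<phi> (u @ w)) S)"
    unfolding e using fp fq
    by (simp add: evalE_sum sum_polys evalE_psc evalE_mono)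
  also have "\<dots> = (\<lambda>S. \<Sum>u\<in>psupp p. \<Sum>w\<in>psupp q. gmul (gsc (p u) (gword \<phi> u)) (gsc (q w) (gword \<phi> w)) S)"
    using a by (simp add: gword_append gmul_sc_left gmul_sc_right gsc_gsc ac_simps)
  also have "\<dots> = gmul (\<lambda>S. \<Sum>u\<in>psupp p. gsc (p u) (gword \<phi> u) S) (\<lambda>S. \<Sum>w\<in>psupp q. gsc (q w) (gword \<phi> w) S)"
    by (simp add: gmul_sum_left gmul_sum_right)
  also have "\<dots> = gmul (evalE p \<phi>) (evalE q \<phi>)"
    by (simp add: evalE_W[OF fp] evalE_W[OF fq] gsc_def)
  finally show ?thesis .
qed

lemma evalE_pone: "evalE pone \<phi> = gone"
  by (simp add: pone_def evalE_mono gword_def)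

lemma evalE_Ecan:
  assumes "homog n q" "adm \<phi>"
  shows "evalE q \<phi> \<in> Ecan n"
proof -
  have "evalE q \<phi> = (\<lambda>S. \<Sum>w\<in>psupp q. gsc (q w) (gword \<phi> w) S)"
    unfolding evalE_def psupp_def gsc_def by simp
  also have "\<dots> \<in> Ecan n"
    using assms gword_Ecan[of \<phi>] by (intro Ecan_sum Ecan_sc) (auto simp: homog_def psupp_def)
  finally show ?thesis .
qed

lemma pword_polys: "(\<And>x. \<psi> x \<in> polys) \<Longrightarrow> pword \<psi> w \<in> polys"
  by (induction w) (auto simp: pword_def)

lemma pword_Cons: "pword \<psi> (x # w) = pmul (\<psi> x) (pword \<psi> w)"
  by (simp add: pword_def)
lemma gword_Cons: "gword \<phi> (x # w) = gmul (\<phi> x) (gword \<phi> w)"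
  by (simp add: gword_def)

lemma evalE_pword:
  assumes "\<And>x. homog (alpha x) (\<psi> x)" "adm \<phi>"
  shows "evalE (pword \<psi> w) \<phi> = gword (\<lambda>x. evalE (\<psi> x) \<phi>) w"
proof (induction w)
  case Nil
  then show ?case by (simp add: pword_def gword_def evalE_pone)
next
  case (Cons x w)
  have "\<And>x. \<psi> x \<in> polys" using assms by (simp add: homog_def)
  then show ?case using Cons assms
    by (simp add: pword_Cons gword_Cons evalE_pmul pword_polys)
qed

lemma psubst_eq: "psubst \<psi> p = (\<lambda>v. \<Sum>w\<in>psupp p. psc (p w) (pword \<psi> w) v)"
  by (simp add: psubst_def psupp_def psc_def)

lemma psubst_polys:
  assumes "\<And>x. \<psi> x \<in> polys" shows "psubst \<psi> p \<in> polys"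
  unfolding psubst_eq by (intro sum_polys psc_polys pword_polys assms)

lemma evalE_psubst:
  assumes "\<And>x. homog (alpha x) (\<psi> x)" "adm \<phi>" "p \<in> polys"
  shows "evalE (psubst \<psi> p) \<phi> = evalE p (\<lambda>x. evalE (\<psi> x) \<phi>)"
proof -
  have pp: "\<And>x. \<psi> x \<in> polys" using assms by (simp add: homog_def)
  have f: "finite (psupp p)" using assms by (simp add: polys_iff)
  show ?thesis unfolding psubst_eq using f pp
    by (simp add: evalE_sum pword_polys evalE_psc evalE_pword[OF assms(1,2)])
       (simp add: evalE_def psupp_def gsc_def)
qed


lemma TZ_Ecan_iff: "p \<in> TZ_Ecan \<longleftrightarrow> p \<in> polys \<and> (\<forall>\<phi>. adm \<phi> \<longrightarrow> evalE p \<phi> = (\<lambda>S. 0))"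
  by (simp add: TZ_Ecan_def adm_def)

lemma evalE_zero[simp]: "evalE (\<lambda>w. 0) \<phi> = (\<lambda>S. 0)" and evalE_pzero[simp]: "evalE pzero \<phi> = (\<lambda>S. 0)"
  by (simp_all add: evalE_def pzero_def)

lemma TZ_Ecan_ideal: "TZ_ideal (TZ_Ecan :: ('a::field) fpoly set)"
  unfolding TZ_ideal_def two_sided_ideal_def
proof (intro conjI ballI allI impI)
  show "TZ_Ecan \<subseteq> (polys :: 'a fpoly set)" by (auto simp: TZ_Ecan_iff)
  show "pzero \<in> (TZ_Ecan :: 'a fpoly set)" by (simp add: TZ_Ecan_iff)
  fix p assume p: "p \<in> (TZ_Ecan :: 'a fpoly set)"
  {
    fix q assume q: "q \<in> (TZ_Ecan :: 'a fpoly set)"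
    show "padd p q \<in> TZ_Ecan" using p q by (simp add: TZ_Ecan_iff evalE_padd)
  }
  {
    fix q assume q: "q \<in> (polys :: 'a fpoly set)"
    show "pmul q p \<in> TZ_Ecan" using p q by (simp add: TZ_Ecan_iff evalE_pmul)
    show "pmul p q \<in> TZ_Ecan" using p q by (simp add: TZ_Ecan_iff evalE_pmul)
  }
  {
    fix \<psi> :: "var \<Rightarrow> 'a fpoly" assume h: "\<forall>x. homog (alpha x) (\<psi> x)"
    have pp: "\<And>x. \<psi> x \<in> polys" using h unfolding homog_def by blast
    show "psubst \<psi> p \<in> TZ_Ecan"
      unfolding TZ_Ecan_iff
    proof (intro conjI allI impI)
      show "psubst \<psi> p \<in> polys" by (rule psubst_polys[OF pp])
      fix \<phi> :: "var \<Rightarrow> 'a grass" assume a: "adm \<phi>"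
      have a': "adm (\<lambda>x. evalE (\<psi> x) \<phi>)" unfolding adm_def using h a evalE_Ecan by blast
      have "evalE (psubst \<psi> p) \<phi> = evalE p (\<lambda>x. evalE (\<psi> x) \<phi>)"
        using h a p by (intro evalE_psubst) (auto simp: TZ_Ecan_iff)
      also have "\<dots> = (\<lambda>S. 0)" using p a' by (simp add: TZ_Ecan_iff)
      finally show "evalE (psubst \<psi> p) \<phi> = (\<lambda>S. 0)" .
    qed
  }
qed

lemma gword_single: "adm \<phi> \<Longrightarrow> gword \<phi> [x] = \<phi> x"
  using gmul_gone_right[OF Ecan_gelems[OF adm_D]] by (simp add: gword_def)

lemma gword_two: "adm \<phi> \<Longrightarrow> gword \<phi> [x, y] = gmul (\<phi> x) (\<phi> y)"
  using gword_single[of \<phi> y] by (simp add: gword_def)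

lemma even_nat_int: "even (k::int) \<Longrightarrow> even (nat k)"
  by (cases "k \<ge> 0") (auto simp: even_nat_iff)

lemma comm_vars:
  assumes "adm \<phi>"
  shows "gmul (\<phi> x) (\<phi> y) = gsc ((-1) ^ (nat (alpha x) * nat (alpha y))) (gmul (\<phi> y) (\<phi> x))"
proof (cases "alpha x < 0 \<or> alpha y < 0")
  case True
  then show ?thesis using assms Ecan_neg[OF adm_D[OF assms, of x]] Ecan_neg[OF adm_D[OF assms, of y]]
    by auto
next
  case False
  then have "\<phi> x \<in> Ecan (int (nat (alpha x)))" "\<phi> y \<in> Ecan (int (nat (alpha y)))"
    using adm_D[OF assms] by auto
  then show ?thesis by (rule gmul_comm)
qed

lemma gens_TZ_Ecan: "gens_Ecan \<subseteq> (TZ_Ecan :: ('a::field_char_0) fpoly set)"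
proof
  fix g :: "'a fpoly" assume "g \<in> gens_Ecan"
  then consider (neg) x where "g = mono [x]" "alpha x < 0"
    | (ev) x1 x2 where "g = pdiff (mono [x1, x2]) (mono [x2, x1])" "even (alpha x1) \<or> even (alpha x2)"
    | (od) x1 x2 where "g = padd (mono [x1, x2]) (mono [x2, x1])" "odd (alpha x1) \<and> odd (alpha x2)"
    unfolding gens_Ecan_def by blast
  then show "g \<in> TZ_Ecan"
  proof cases
    case neg
    then show ?thesis
      by (auto simp: TZ_Ecan_iff evalE_mono gword_single intro: Ecan_neg adm_D)
  next
    case ev
    have "even (nat (alpha x1) * nat (alpha x2))"
      using ev(2) by (auto dest: even_nat_int)
    then show ?thesis using ev(1)
      by (auto simp: TZ_Ecan_iff evalE_mono evalE_pdiff gword_two comm_vars[of _ x1 x2] gsc_def)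
  next
    case od
    show ?thesis
    proof (cases "alpha x1 < 0 \<or> alpha x2 < 0")
      case True
      have "\<And>\<phi>::var \<Rightarrow> 'a grass. adm \<phi> \<Longrightarrow> \<phi> x1 = (\<lambda>S. 0) \<or> \<phi> x2 = (\<lambda>S. 0)"
        using True Ecan_neg adm_D by blast
      then show ?thesis using od(1)
        by (simp add: TZ_Ecan_iff evalE_mono evalE_padd gword_two) fastforce
    next
      case False
      have "odd (nat (alpha x1) * nat (alpha x2))"
        using od(2) False by (auto simp: even_nat_iff)
      then show ?thesis using od(1)
        by (auto simp: TZ_Ecan_iff evalE_mono evalE_padd gword_two comm_vars[of _ x1 x2] gsc_def)
    qed
  qed
qed


lemma pmul_pone_left: "pmul pone p = p"
proof
  fix w
  have "pmul pone p w = (\<Sum>i\<le>length w. if i = 0 then p w else 0)"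
    unfolding pmul_def pone_def mono_def by (rule sum.cong) auto
  then show "pmul pone p w = p w" by simp
qed

definition eps :: "var \<Rightarrow> var \<Rightarrow> 'a::field" where
  "eps x y = (if odd (alpha x) \<and> odd (alpha y) then -1 else 1)"

fun insgn :: "var \<Rightarrow> var list \<Rightarrow> 'a::field" where
  "insgn x [] = 1"
| "insgn x (y # ys) = (if x \<le> y then 1 else eps x y * insgn x ys)"

fun srtsgn :: "var list \<Rightarrow> 'a::field" where
  "srtsgn [] = 1"
| "srtsgn (x # xs) = srtsgn xs * insgn x (sort xs)"


definition good :: "var list \<Rightarrow> bool" where
  "good v \<longleftrightarrow> (\<forall>x\<in>set v. alpha x \<ge> 0) \<and>
     (\<forall>i. Suc i < length v \<longrightarrow> v ! i = v ! Suc i \<longrightarrow> even (alpha (v ! i)))"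

definition ncoef :: "var list \<Rightarrow> 'a::field" where
  "ncoef w = (if good (sort w) then srtsgn w else 0)"


locale gideal =
  fixes I :: "('a::field_char_0) fpoly set"
  assumes tsi: "two_sided_ideal I" and gens: "gens_Ecan \<subseteq> I"
begin

lemma sub: "I \<subseteq> polys" using tsi by (simp add: two_sided_ideal_def)
lemma zero: "pzero \<in> I" using tsi by (simp add: two_sided_ideal_def)
lemma zero': "(\<lambda>w. 0) \<in> I" using zero by (simp add: pzero_def)
lemma add: "p \<in> I \<Longrightarrow> q \<in> I \<Longrightarrow> padd p q \<in> I" using tsi by (simp add: two_sided_ideal_def)
lemma mulL: "p \<in> I \<Longrightarrow> q \<in> polys \<Longrightarrow> pmul q p \<in> I" using tsi by (simp add: two_sided_ideal_def)
lemma mulR: "p \<in> I \<Longrightarrow> q \<in> polys \<Longrightarrow> pmul p q \<in> I" using tsi by (simp add: two_sided_ideal_def)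

lemma sc: "p \<in> I \<Longrightarrow> psc c p \<in> I"
proof -
  assume p: "p \<in> I"
  have "psc c p = pmul (psc c pone) p" by (simp add: pmul_sc_left pmul_pone_left)
  then show ?thesis using mulL[OF p, of "psc c pone"] by simp
qed

lemma diff: "p \<in> I \<Longrightarrow> q \<in> I \<Longrightarrow> pdiff p q \<in> I"
proof -
  assume "p \<in> I" "q \<in> I"
  moreover have "pdiff p q = padd p (psc (-1) q)" by (simp add: pdiff_def padd_def psc_def fun_eq_iff)
  ultimately show ?thesis using add sc by simp
qed

lemma sum: "(\<And>i. i \<in> J \<Longrightarrow> f i \<in> I) \<Longrightarrow> (\<lambda>w. \<Sum>i\<in>J. f i w) \<in> I"
proof (induction J rule: infinite_finite_induct)
  case (insert x F)
  then have "padd (f x) (\<lambda>w. \<Sum>i\<in>F. f i w) \<in> I" by (intro add) auto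
  then show ?case using insert by (simp add: padd_def)
qed (simp_all add: zero')

lemma ctx: "q \<in> I \<Longrightarrow> pmul (mono u) (pmul q (mono v)) \<in> I"
  by (intro mulL mulR) auto

definition rel :: "'a fpoly \<Rightarrow> 'a \<Rightarrow> 'a fpoly \<Rightarrow> bool" where
  "rel p c q \<longleftrightarrow> pdiff p (psc c q) \<in> I"

lemma rel_refl: "rel p 1 p"
  using zero by (simp add: rel_def pdiff_def psc_def pzero_def)

lemma rel_trans:
  assumes "rel p a q" "rel q b r" "q \<in> polys" "r \<in> polys"
  shows "rel p (a * b) r"
proof -
  have "pdiff p (psc (a * b) r) = padd (pdiff p (psc a q)) (psc a (pdiff q (psc b r)))"
    by (simp add: pdiff_def padd_def psc_def fun_eq_iff algebra_simps)
  then show ?thesis using assms add sc unfolding rel_def by simp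
qed

lemma ctx_lin: "pmul (mono u) (pmul (pdiff (mono a) (psc c (mono b))) (mono v)) =
    pdiff (mono (u @ a @ v)) (psc c (mono (u @ b @ v)))"
  by (simp add: pmul_diff_left pmul_diff_right pmul_sc_left pmul_sc_right pmul_mono)

lemma swap: "rel (mono (u @ [x, y] @ v)) (eps x y) (mono (u @ [y, x] @ v))"
proof -
  have "pdiff (mono [x, y]) (psc (eps x y) (mono [y, x])) \<in> I"
  proof (cases "odd (alpha x) \<and> odd (alpha y)")
    case True
    then have "padd (mono [x, y]) (mono [y, x]) \<in> I" using gens unfolding gens_Ecan_def by blast
    moreover have "pdiff (mono [x, y]) (psc (eps x y) (mono [y, x])) = padd (mono [x, y]) (mono [y, x])"
      using True by (simp add: eps_def pdiff_def padd_def psc_def fun_eq_iff)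
    ultimately show ?thesis by metis
  next
    case False
    then have "pdiff (mono [x, y]) (mono [y, x]) \<in> I" using gens unfolding gens_Ecan_def by blast
    moreover have "pdiff (mono [x, y]) (psc (eps x y) (mono [y, x])) = pdiff (mono [x, y]) (mono [y, x])"
      using False by (auto simp: eps_def pdiff_def psc_def fun_eq_iff)
    ultimately show ?thesis by metis
  qed
  from ctx[OF this, of u v] show ?thesis unfolding ctx_lin rel_def .
qed

lemma neg_in: "alpha x < 0 \<Longrightarrow> mono (u @ [x] @ v) \<in> I"
proof -
  assume "alpha x < 0"
  then have "mono [x] \<in> I" using gens unfolding gens_Ecan_def by blast
  from ctx[OF this, of u v] show ?thesis by (simp add: pmul_mono)
qed

lemma sq_in: "odd (alpha x) \<Longrightarrow> mono (u @ [x, x] @ v) \<in> I"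
proof -
  assume "odd (alpha x)"
  then have "padd (mono [x, x]) (mono [x, x]) \<in> I" using gens unfolding gens_Ecan_def by blast
  then have "psc (1/2) (padd (mono [x, x]) (mono [x, x])) \<in> I" by (rule sc)
  moreover have "psc (1/2) (padd (mono [x, x]) (mono [x, x])) = (mono [x, x] :: 'a fpoly)"
    by (simp add: psc_def padd_def fun_eq_iff)
  ultimately have "mono [x, x] \<in> I" by simp
  from ctx[OF this, of u v] show ?thesis by (simp add: pmul_mono)
qed

lemma ins_rel: "rel (mono (u @ x # ys @ v)) (insgn x ys) (mono (u @ insort x ys @ v))"
proof (induction ys arbitrary: u)
  case Nil
  then show ?case using rel_refl by simp
next
  case (Cons y ys)
  show ?case
  proof (cases "x \<le> y")
    case True
    then show ?thesis using rel_refl by simp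
  next
    case False
    have r1: "rel (mono (u @ x # y # ys @ v)) (eps x y) (mono (u @ y # x # ys @ v))"
      using swap[of u x y "ys @ v"] by simp
    have r2: "rel (mono (u @ y # x # ys @ v)) (insgn x ys) (mono (u @ y # insort x ys @ v))"
      using Cons.IH[of "u @ [y]"] by simp
    show ?thesis using rel_trans[OF r1 r2] False by simp
  qed
qed

lemma srt_rel: "rel (mono (u @ xs @ v)) (srtsgn xs) (mono (u @ sort xs @ v))"
proof (induction xs arbitrary: u)
  case Nil
  then show ?case using rel_refl by simp
next
  case (Cons x xs)
  have r1: "rel (mono (u @ x # xs @ v)) (srtsgn xs) (mono (u @ x # sort xs @ v))"
    using Cons.IH[of "u @ [x]"] by simp
  have r2: "rel (mono (u @ x # sort xs @ v)) (insgn x (sort xs)) (mono (u @ insort x (sort xs) @ v))"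
    by (rule ins_rel)
  show ?case using rel_trans[OF r1 r2] by simp
qed

end

lemma split_adj: "Suc i < length v \<Longrightarrow> v = take i v @ [v ! i, v ! Suc i] @ drop (Suc (Suc i)) v"
  by (simp add: Cons_nth_drop_Suc)

context gideal
begin

lemma bad_in: "\<not> good v \<Longrightarrow> mono v \<in> I"
proof -
  assume "\<not> good v"
  then consider (a) x where "x \<in> set v" "alpha x < 0"
    | (b) i where "Suc i < length v" "v ! i = v ! Suc i" "odd (alpha (v ! i))"
    unfolding good_def by force
  then show ?thesis
  proof cases
    case a
    then obtain u w where "v = u @ x # w" by (meson split_list)
    then show ?thesis using neg_in[OF a(2), of u w] by simp
  next
    case b
    have "v = take i v @ [v ! i, v ! i] @ drop (Suc (Suc i)) v"
      using split_adj[OF b(1)] b(2) by simp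
    then show ?thesis using sq_in[OF b(3), of "take i v" "drop (Suc (Suc i)) v"] by simp
  qed
qed

lemma nf_rel: "rel (mono w) (ncoef w) (mono (sort w))"
proof (cases "good (sort w)")
  case True
  then show ?thesis using srt_rel[of "[]" w "[]"] by (simp add: ncoef_def)
next
  case False
  have b: "mono (sort w) \<in> I" by (rule bad_in[OF False])
  have "rel (mono w) (srtsgn w) (mono (sort w))" using srt_rel[of "[]" w "[]"] by simp
  then have "padd (pdiff (mono w) (psc (srtsgn w) (mono (sort w)))) (psc (srtsgn w) (mono (sort w))) \<in> I"
    unfolding rel_def using b by (intro add sc)
  moreover have "padd (pdiff (mono w) (psc (srtsgn w) (mono (sort w)))) (psc (srtsgn w) (mono (sort w))) =
     pdiff (mono w) (psc (ncoef w) (mono (sort w)))"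
    using False by (simp add: ncoef_def padd_def pdiff_def psc_def fun_eq_iff)
  ultimately show ?thesis unfolding rel_def by metis
qed

end

definition nfp :: "('a::field_char_0) fpoly \<Rightarrow> 'a fpoly" where
  "nfp p = (\<lambda>v. \<Sum>w\<in>psupp p. psc (p w * ncoef w) (mono (sort w)) v)"


context gideal
begin

lemma reduce:
  assumes p: "p \<in> polys"
  shows "pdiff p (nfp p) \<in> I"
proof -
  have f: "finite (psupp p)" using p by (simp add: polys_iff)
  have "pdiff p (nfp p) = (\<lambda>v. \<Sum>w\<in>psupp p. psc (p w) (pdiff (mono w) (psc (ncoef w) (mono (sort w)))) v)"
  proof
    fix v
    have "p v = (\<Sum>w\<in>psupp p. psc (p w) (mono w) v)"
      using pexpand[OF f subset_refl] by metis
    then show "pdiff p (nfp p) v = (\<Sum>w\<in>psupp p. psc (p w) (pdiff (mono w) (psc (ncoef w) (mono (sort w)))) v)"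
      by (simp add: pdiff_def nfp_def psc_def sum_subtractf algebra_simps)
  qed
  also have "\<dots> \<in> I"
    by (intro sum sc) (use nf_rel in \<open>auto simp: rel_def\<close>)
  finally show ?thesis .
qed

end

lemma nfp_polys: "p \<in> polys \<Longrightarrow> nfp p \<in> polys"
  unfolding nfp_def by (intro sum_polys psc_polys mono_polys)

lemma nfp_supp: "nfp p v \<noteq> 0 \<Longrightarrow> sorted v \<and> good v"
proof -
  assume "nfp p v \<noteq> 0"
  then obtain w where "psc (p w * ncoef w) (mono (sort w)) v \<noteq> 0"
    unfolding nfp_def using sum.not_neutral_contains_not_neutral by blast
  then have "ncoef w \<noteq> (0::'a)" "v = sort w" by (auto simp: psc_def mono_def split: if_splits)
  then show ?thesis by (auto simp: ncoef_def split: if_splits)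
qed

definition comp :: "var \<Rightarrow> nat \<Rightarrow> ('a::field) fpoly \<Rightarrow> 'a fpoly" where
  "comp x k r = (\<lambda>w. if count_list w x = k then r w else 0)"

lemma comp_polys: "r \<in> polys \<Longrightarrow> comp x k r \<in> polys"
  unfolding polys_def comp_def mem_Collect_eq
  by (rule finite_subset[of _ "{w. r w \<noteq> 0}"]) auto

lemma gword_scale:
  "gword (\<phi>(x := gsc t (\<phi> x))) w = gsc (t ^ count_list w x) (gword \<phi> w)"
proof (induction w)
  case Nil
  then show ?case by (simp add: gword_def gsc_def)
next
  case (Cons y w)
  then show ?case
    by (cases "y = x") (simp_all add: gword_Cons gmul_sc_left gmul_sc_right gsc_gsc mult.commute)
qed

lemma comp_TZ:
  assumes r: "r \<in> (TZ_Ecan :: ('a::field_char_0) fpoly set)"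
  shows "comp x k r \<in> TZ_Ecan"
  unfolding TZ_Ecan_iff
proof (intro conjI allI impI)
  have rp: "r \<in> polys" and r0: "\<And>\<phi>. adm \<phi> \<Longrightarrow> evalE r \<phi> = (\<lambda>S. 0)" using r by (auto simp: TZ_Ecan_iff)
  show "comp x k r \<in> polys" by (rule comp_polys[OF rp])
  fix \<phi> :: "var \<Rightarrow> 'a grass" assume a: "adm \<phi>"
  define W where "W = psupp r"
  have fW: "finite W" using rp by (simp add: W_def polys_iff)
  define D where "D = k + (\<Sum>w\<in>W. count_list w x)"
  have cD: "count_list w x \<le> D" if "w \<in> W" for w
    unfolding D_def using member_le_sum[OF that, of "\<lambda>w. count_list w x", OF _ fW] by simp
  have kD: "k \<le> D" by (simp add: D_def)
  show "evalE (comp x k r) \<phi> = (\<lambda>S. 0)"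
  proof
    fix S
    define e where "e j = (\<Sum>w\<in>W. if count_list w x = j then r w * gword \<phi> w S else 0)" for j
    have ek: "evalE (comp x k r) \<phi> S = e k"
      unfolding e_def
      by (subst evalE_W[OF fW]) (auto simp: W_def psupp_def comp_def intro!: sum.cong)
    have pt: "(\<Sum>j\<le>D. e j * t ^ j) = 0" for t :: 'a
    proof -
      have at: "adm (\<phi>(x := gsc t (\<phi> x)))"
        using a unfolding adm_def by (auto intro: Ecan_sc)
      have "0 = evalE r (\<phi>(x := gsc t (\<phi> x))) S" using r0[OF at] by simp
      also have "\<dots> = (\<Sum>w\<in>W. r w * (t ^ count_list w x * gword \<phi> w S))"
        by (subst evalE_W[OF fW]) (simp_all add: W_def gword_scale, simp add: gsc_def)
      also have "\<dots> = (\<Sum>w\<in>W. \<Sum>j\<le>D. if count_list w x = j then r w * gword \<phi> w S * t ^ j else 0)"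
      proof (rule sum.cong)
        fix w assume "w \<in> W"
        then have "count_list w x \<in> {..D}" using cD by simp
        then show "r w * (t ^ count_list w x * gword \<phi> w S) =
            (\<Sum>j\<le>D. if count_list w x = j then r w * gword \<phi> w S * t ^ j else 0)"
          by (simp add: sum.delta ac_simps)
      qed simp
      also have "\<dots> = (\<Sum>j\<le>D. e j * t ^ j)"
        unfolding e_def by (subst sum.swap) (auto simp: sum_distrib_right intro!: sum.cong)
      finally show ?thesis by simp
    qed
    define P where "P = (\<Sum>j\<le>D. monom (e j) j)"
    have "\<forall>t. poly P t = 0" using pt by (simp add: P_def poly_sum poly_monom)
    then have "P = 0" using poly_all_0_iff_0 by blast
    then have "coeff P k = 0" by simp
    moreover have "coeff P k = e k" using kD by (simp add: P_def coeff_sum coeff_monom)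
    ultimately show "evalE (comp x k r) \<phi> S = 0" using ek by simp
  qed
qed

definition compall :: "var list \<Rightarrow> var list \<Rightarrow> ('a::field) fpoly \<Rightarrow> 'a fpoly" where
  "compall v0 xs r = foldr (\<lambda>x acc. comp x (count_list v0 x) acc) xs r"

lemma compall_TZ: "r \<in> (TZ_Ecan :: ('a::field_char_0) fpoly set) \<Longrightarrow> compall v0 xs r \<in> TZ_Ecan"
  by (induction xs) (simp_all add: compall_def comp_TZ)

lemma compall_val: "compall v0 xs r w = (if \<forall>x\<in>set xs. count_list w x = count_list v0 x then r w else 0)"
  by (induction xs) (auto simp: compall_def comp_def)


definition gpow :: "('a::field) grass \<Rightarrow> nat \<Rightarrow> 'a grass" where
  "gpow a n = (gmul a ^^ n) gone"

lemma gpow_0[simp]: "gpow a 0 = gone" and gpow_Suc: "gpow a (Suc n) = gmul a (gpow a n)"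
  by (simp_all add: gpow_def)

lemma gword_replicate: "gword \<phi> (replicate k y) = gpow (\<phi> y) k"
  by (induction k) (simp_all add: gword_def gpow_Suc)

lemma gpow_Ecan: "a \<in> Ecan (int e) \<Longrightarrow> gpow a m \<in> Ecan (int (e * m))"
proof (induction m)
  case 0
  then show ?case using gone_Ecan by simp
next
  case (Suc m)
  then have "gmul a (gpow a m) \<in> Ecan (int e + int (e * m))" by (intro gmul_Ecan)
  then show ?case by (simp add: gpow_Suc algebra_simps)
qed

lemma gsc_one[simp]: "gsc 1 a = a" by (simp add: gsc_def)

lemma binom_step:
  assumes \<epsilon>: "\<epsilon> \<in> Ecan (int e)" and s: "s \<in> Ecan (int e)" and ev: "even e"
    and sq: "gmul \<epsilon> \<epsilon> = (\<lambda>S. 0)"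
  shows "gpow (\<lambda>S. \<epsilon> S + s S) (Suc m) =
     (\<lambda>S. gpow s (Suc m) S + gsc (of_nat (Suc m)) (gmul \<epsilon> (gpow s m)) S)"
proof (induction m)
  case 0
  have "(\<lambda>S. \<epsilon> S + s S) \<in> Ecan (int e)" using \<epsilon> s by (rule Ecan_add)
  then show ?case using \<epsilon> s by (simp add: gpow_Suc gmul_gone_right Ecan_gelems add.commute)
next
  case (Suc m)
  define P where "P = gpow s (Suc m)"
  define G where "G = gpow s m"
  have gP: "P \<in> gelems" and gG: "G \<in> gelems" using gpow_Ecan[OF s] by (auto simp: P_def G_def intro: Ecan_gelems)
  have g\<epsilon>: "\<epsilon> \<in> gelems" and gs: "s \<in> gelems" using \<epsilon> s by (auto intro: Ecan_gelems)
  have com: "gmul s \<epsilon> = gmul \<epsilon> s"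
    using gmul_comm[OF s \<epsilon>] ev by (simp add: gsc_def)
  have e1: "gmul \<epsilon> (gmul \<epsilon> G) = (\<lambda>S. 0)"
    using gmul_assoc[OF g\<epsilon> g\<epsilon> gG] sq by simp
  have e2: "gmul s (gmul \<epsilon> G) = gmul \<epsilon> P"
  proof -
    have "gmul s (gmul \<epsilon> G) = gmul (gmul s \<epsilon>) G" using gmul_assoc[OF gs g\<epsilon> gG] by simp
    also have "\<dots> = gmul (gmul \<epsilon> s) G" by (simp add: com)
    also have "\<dots> = gmul \<epsilon> (gmul s G)" using gmul_assoc[OF g\<epsilon> gs gG] by simp
    finally show ?thesis by (simp add: P_def G_def gpow_Suc)
  qed
  have "gpow (\<lambda>S. \<epsilon> S + s S) (Suc (Suc m)) = gmul (\<lambda>S. \<epsilon> S + s S) (\<lambda>S. P S + gsc (of_nat (Suc m)) (gmul \<epsilon> G) S)"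
    by (simp add: gpow_Suc[of _ "Suc m"] Suc P_def G_def)
  also have "\<dots> = (\<lambda>S. gmul \<epsilon> P S + gmul s P S + (of_nat (Suc m) * gmul \<epsilon> (gmul \<epsilon> G) S + of_nat (Suc m) * gmul s (gmul \<epsilon> G) S))"
    by (simp add: gmul_add_left gmul_add_right gmul_sc_right) (simp add: gsc_def algebra_simps)
  also have "\<dots> = (\<lambda>S. gpow s (Suc (Suc m)) S + gsc (of_nat (Suc (Suc m))) (gmul \<epsilon> (gpow s (Suc m))) S)"
    by (simp add: e1 e2 gsc_def P_def gpow_Suc[of s "Suc m"] algebra_simps)
  finally show ?case .
qed

definition blk :: "var \<Rightarrow> nat \<Rightarrow> nat set" where
  "blk x j = (\<lambda>l. to_nat (x, j, l)) ` {..<nat (alpha x)}"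

lemma blk_finite[simp]: "finite (blk x j)"
  by (simp add: blk_def)

lemma blk_card: "card (blk x j) = nat (alpha x)"
  unfolding blk_def by (subst card_image) (auto simp: inj_on_def)

lemma blk_disj: "(x, j) \<noteq> (x', j') \<Longrightarrow> blk x j \<inter> blk x' j' = {}"
  unfolding blk_def by (auto dest: injD[OF inj_to_nat])

lemma blk_ne: assumes "alpha x > 0" shows "blk x j \<noteq> {}"
proof -
  have "0 < nat (alpha x)" using assms by simp
  then have "0 \<in> {..<nat (alpha x)}" by (simp only: lessThan_iff)
  then show ?thesis unfolding blk_def by blast
qed

lemma blk_zero: "alpha x \<le> 0 \<Longrightarrow> blk x j = {}"
  unfolding blk_def by auto

definition bsum :: "var \<Rightarrow> nat set \<Rightarrow> ('a::field) grass" where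
  "bsum x J = (\<lambda>S. \<Sum>j\<in>J. gb (blk x j) S)"

lemma bsum_Ecan: "alpha x \<ge> 0 \<Longrightarrow> bsum x J \<in> Ecan (alpha x)"
  unfolding bsum_def using gb_Ecan[of "blk x _"] by (intro Ecan_sum) (simp add: blk_card)

lemma pow_lemma:
  assumes pos: "alpha x > 0" and ev: "even (alpha x)" and fin: "finite J"
  shows "(\<exists>c. c \<noteq> 0 \<and> gpow (bsum x J) (card J) = gsc c (gb (\<Union>j\<in>J. blk x j) :: ('a::field_char_0) grass)) \<and>
         gpow (bsum x J :: 'a grass) (Suc (card J)) = (\<lambda>S. 0)"
  using fin
proof (induction J rule: finite_induct)
  case empty
  have b0: "bsum x {} = (\<lambda>S. 0)" by (simp add: bsum_def)
  show ?case
  proof (intro conjI)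
    show "\<exists>c. c \<noteq> 0 \<and> gpow (bsum x {}) (card {}) = gsc c (gb (\<Union>j\<in>{}. blk x j) :: 'a grass)"
      by (rule exI[of _ 1]) (simp add: gone_gb)
    show "gpow (bsum x {} :: 'a grass) (Suc (card {})) = (\<lambda>S. 0)" by (simp add: gpow_Suc b0)
  qed
next
  case (insert i J)
  define e where "e = nat (alpha x)"
  have ie: "int e = alpha x" using pos by (simp add: e_def)
  have eve: "even e" using ev pos by (simp add: e_def even_nat_iff)
  define \<epsilon> :: "'a grass" where "\<epsilon> = gb (blk x i)"
  have \<epsilon>E: "\<epsilon> \<in> Ecan (int e)"
  proof -
    have "gb (blk x i) \<in> Ecan (int (card (blk x i)))" by (rule gb_Ecan) simp
    then show ?thesis by (simp only: \<epsilon>_def blk_card e_def)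
  qed
  have sE: "(bsum x J :: 'a grass) \<in> Ecan (int e)" using bsum_Ecan[of x J] pos ie by simp
  have sq: "gmul \<epsilon> \<epsilon> = (\<lambda>S. 0)" unfolding \<epsilon>_def using blk_ne[OF pos, of i] by (simp add: gmul_gb')
  have bi: "bsum x (insert i J) = (\<lambda>S. \<epsilon> S + bsum x J S)"
    using insert by (simp add: bsum_def \<epsilon>_def)
  obtain c :: 'a where c: "c \<noteq> 0" "gpow (bsum x J) (card J) = gsc c (gb (\<Union>j\<in>J. blk x j))"
    using insert.IH by blast
  have z: "gpow (bsum x J :: 'a grass) (Suc (card J)) = (\<lambda>S. 0)" using insert.IH by blast
  have disj: "blk x i \<inter> (\<Union>j\<in>J. blk x j) = {}"
  proof -
    have "blk x i \<inter> blk x j = {}" if "j \<in> J" for j using blk_disj[of x i x j] insert(2) that by auto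
    then show ?thesis by blast
  qed
  have "gpow (bsum x (insert i J)) (card (insert i J)) =
        (\<lambda>S. gpow (bsum x J) (Suc (card J)) S + gsc (of_nat (Suc (card J))) (gmul \<epsilon> (gpow (bsum x J) (card J))) S)"
    using insert by (simp add: bi binom_step[OF \<epsilon>E sE eve sq])
  also have "\<dots> = gsc (of_nat (Suc (card J)) * c * gsign (blk x i) (\<Union>j\<in>J. blk x j)) (gb (\<Union>j\<in>insert i J. blk x j))"
    using disj insert(1) by (simp add: z c gmul_sc_right \<epsilon>_def gmul_gb' gsc_gsc ac_simps)
  finally have A: "gpow (bsum x (insert i J)) (card (insert i J)) = \<dots>" .
  have "gpow (bsum x (insert i J)) (Suc (card (insert i J))) =
        (\<lambda>S. gpow (bsum x J) (Suc (Suc (card J))) S + gsc (of_nat (Suc (Suc (card J)))) (gmul \<epsilon> (gpow (bsum x J) (Suc (card J)))) S)"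
    using insert by (simp add: bi binom_step[OF \<epsilon>E sE eve sq])
  also have "\<dots> = (\<lambda>S. 0)" by (simp add: z gpow_Suc[of _ "Suc (card J)"])
  finally have B: "gpow (bsum x (insert i J) :: 'a grass) (Suc (card (insert i J))) = (\<lambda>S. 0)" .
  have nz: "(of_nat (Suc (card J)) :: 'a) * c * gsign (blk x i) (\<Union>j\<in>J. blk x j) \<noteq> 0"
    using c(1) by (simp only: mult_eq_0_iff of_nat_eq_0_iff gsign_nz) simp
  show ?case using A B nz by blast
qed


lemma run_decomp: "\<exists>k rest. k \<ge> 1 \<and> y # w = replicate k y @ rest \<and> (rest = [] \<or> hd rest \<noteq> y)"
proof (induction w)
  case Nil
  then show ?case by (intro exI[of _ 1] exI[of _ "[]"]) simp
next
  case (Cons z w)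
  show ?case
  proof (cases "z = y")
    case True
    from Cons obtain k rest where "k \<ge> 1" "y # w = replicate k y @ rest" "rest = [] \<or> hd rest \<noteq> y" by blast
    then show ?thesis using True by (intro exI[of _ "Suc k"] exI[of _ rest]) simp
  next
    case False
    then show ?thesis by (intro exI[of _ 1] exI[of _ "z # w"]) simp
  qed
qed

lemma notin_rest:
  assumes s: "sorted (replicate k y @ rest)" and k: "k \<ge> 1" and h: "rest = [] \<or> hd rest \<noteq> y"
  shows "y \<notin> set rest"
proof
  assume y: "y \<in> set rest"
  then obtain a r' where r: "rest = a # r'" by (cases rest) auto
  have "y \<le> a" using s k r by (auto simp: sorted_append)
  moreover have "a \<le> y" using s y r by (auto simp: sorted_append)
  ultimately have "a = y" by simp
  then show False using h r by simp
qed

definition phi0 :: "var list \<Rightarrow> var \<Rightarrow> ('a::field) grass" where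
  "phi0 v0 x = (if alpha x < 0 then (\<lambda>S. 0) else if alpha x = 0 then gone else bsum x {..<count_list v0 x})"

lemma phi0_adm: "adm (phi0 v0 :: var \<Rightarrow> ('a::field) grass)"
proof -
  have "(phi0 v0 x :: 'a grass) \<in> Ecan (alpha x)" for x
    by (cases "alpha x < 0"; cases "alpha x = 0") (simp_all add: phi0_def gone_Ecan bsum_Ecan)
  then show ?thesis by (simp add: adm_def)
qed

definition Ublk :: "var list \<Rightarrow> var \<Rightarrow> nat set" where
  "Ublk v0 x = (\<Union>j<count_list v0 x. blk x j)"

lemma Ublk_finite[simp]: "finite (Ublk v0 x)"
  by (simp add: Ublk_def)

lemma Ublk_disj: assumes ne: "x \<noteq> y" shows "Ublk v0 x \<inter> Ublk v0 y = {}"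
proof -
  have "blk x i \<inter> blk y j = {}" for i j using blk_disj[of x i y j] ne by auto
  then show ?thesis unfolding Ublk_def by blast
qed

lemma gpow_gone: "gpow gone k = (gone :: ('a::field) grass)"
proof -
  have g: "gmul gone gone = (gone :: 'a grass)" by (rule gmul_gone_left[OF Ecan_gelems[OF gone_Ecan]])
  show ?thesis by (induction k) (simp_all add: gpow_Suc g)
qed

lemma count_replicate[simp]: "count_list (replicate k y) y = k"
  by (induction k) auto

lemma count_replicate_other[simp]: "x \<noteq> y \<Longrightarrow> count_list (replicate k y) x = 0"
  by (induction k) auto

lemma rep_lemma:
  assumes "alpha y \<ge> 0" "count_list v0 y \<ge> 1" "odd (alpha y) \<Longrightarrow> count_list v0 y = 1"
  shows "\<exists>c. c \<noteq> 0 \<and> gpow (phi0 v0 y) (count_list v0 y) = gsc c (gb (Ublk v0 y) :: ('a::field_char_0) grass)"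
proof -
  consider (z) "alpha y = 0" | (o) "alpha y > 0" "odd (alpha y)" | (e) "alpha y > 0" "even (alpha y)"
    using assms(1) by linarith
  then show ?thesis
  proof cases
    case z
    then have "Ublk v0 y = {}" by (simp add: Ublk_def blk_zero)
    then show ?thesis using z by (intro exI[of _ 1]) (simp add: phi0_def gpow_gone, simp add: gone_gb)
  next
    case o
    then have k: "count_list v0 y = 1" using assms(3) by simp
    have "gpow (phi0 v0 y) 1 = (phi0 v0 y :: 'a grass)"
    proof -
      have "(bsum y {..<1} :: 'a grass) \<in> gelems" using o by (intro Ecan_gelems[OF bsum_Ecan]) simp
      then show ?thesis using o k by (simp add: gpow_Suc phi0_def gmul_gone_right)
    qed
    moreover have "(phi0 v0 y :: 'a grass) = gb (blk y 0)"
      using o k by (simp add: phi0_def bsum_def)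
    moreover have "Ublk v0 y = blk y 0" using k by (simp add: Ublk_def lessThan_Suc)
    ultimately show ?thesis using k by (intro exI[of _ 1]) simp
  next
    case e
    have "phi0 v0 y = (bsum y {..<count_list v0 y} :: 'a grass)" using e by (simp add: phi0_def)
    moreover note pow_lemma[OF e, of "{..<count_list v0 y}", where 'a='a]
    ultimately show ?thesis unfolding Ublk_def by auto
  qed
qed

lemma gb_mul_sc:
  assumes "finite U1" "finite U2" "U1 \<inter> U2 = {}"
  shows "gmul (gsc c1 (gb U1)) (gsc c2 (gb U2)) = gsc (c1 * c2 * gsign U1 U2) (gb (U1 \<union> U2) :: ('a::field) grass)"
  using assms by (simp add: gmul_sc_left gmul_sc_right gmul_gb' gsc_gsc ac_simps)

lemma nv:
  "sorted w \<Longrightarrow> good w \<Longrightarrow> (\<forall>x\<in>set w. count_list w x = count_list v0 x) \<Longrightarrow>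
   \<exists>c. c \<noteq> 0 \<and> gword (phi0 v0) w = gsc c (gb (\<Union>x\<in>set w. Ublk v0 x) :: ('a::field_char_0) grass)"
proof (induction "length w" arbitrary: w rule: less_induct)
  case less
  show ?case
  proof (cases w)
    case Nil
    then show ?thesis by (intro exI[of _ 1]) (simp add: gword_def gone_gb)
  next
    case (Cons y w1)
    obtain k rest where kr: "k \<ge> 1" "w = replicate k y @ rest" "rest = [] \<or> hd rest \<noteq> y"
      using run_decomp[of y w1] Cons by blast
    have yr: "y \<notin> set rest" using notin_rest[of k y rest] kr less.prems(1) by simp
    have ky: "count_list w y = k" using kr(2) yr by simp
    have kv: "count_list v0 y = k" using less.prems(3) ky Cons by auto
    have sr: "sorted rest" using less.prems(1) kr(2) by (simp add: sorted_append)
    have rd: "rest = drop k w" using kr(2) by simp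
    have gr: "good rest"
      unfolding good_def
    proof (intro conjI ballI allI impI)
      fix x assume "x \<in> set rest"
      then show "alpha x \<ge> 0" using less.prems(2) kr(2) by (auto simp: good_def)
    next
      fix i assume "Suc i < length rest" "rest ! i = rest ! Suc i"
      then have "Suc (k + i) < length w" "w ! (k + i) = w ! Suc (k + i)" using rd by auto
      then have "even (alpha (w ! (k + i)))" using less.prems(2) unfolding good_def by blast
      moreover have "k \<le> length w" using kr(2) by simp
      ultimately show "even (alpha (rest ! i))" using rd by (simp add: nth_drop)
    qed
    have cr: "\<forall>x\<in>set rest. count_list rest x = count_list v0 x"
    proof
      fix x assume "x \<in> set rest"
      then have "x \<noteq> y" "x \<in> set w" using yr kr(2) by auto
      moreover have "count_list w x = count_list v0 x" using less.prems(3) \<open>x \<in> set w\<close> by blast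
      ultimately show "count_list rest x = count_list v0 x" using kr(2) by simp
    qed
    have lr: "length rest < length w" using kr by simp
    obtain c2 :: 'a where c2: "c2 \<noteq> 0" "gword (phi0 v0) rest = gsc c2 (gb (\<Union>x\<in>set rest. Ublk v0 x))"
      using less.hyps[OF lr sr gr cr] by blast
    have ay: "alpha y \<ge> 0" using less.prems(2) Cons by (auto simp: good_def)
    have oy: "k = 1" if "odd (alpha y)"
    proof (rule ccontr)
      assume "k \<noteq> 1"
      then have "k \<ge> 2" using kr(1) by simp
      then have "Suc 0 < length w" "w ! 0 = y" "w ! Suc 0 = y" using kr(2) by (auto simp: nth_append)
      then show False using less.prems(2) that unfolding good_def by force
    qed
    obtain c1 :: 'a where c1: "c1 \<noteq> 0" "gpow (phi0 v0 y) k = gsc c1 (gb (Ublk v0 y))"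
      using rep_lemma[of y v0] ay kv kr(1) oy by auto
    have disj: "Ublk v0 y \<inter> (\<Union>x\<in>set rest. Ublk v0 x) = {}"
    proof -
      have "Ublk v0 y \<inter> Ublk v0 x = {}" if "x \<in> set rest" for x
        using Ublk_disj[of y x v0] yr that by auto
      then show ?thesis by blast
    qed
    have "gword (phi0 v0) w = gmul (gword (phi0 v0) (replicate k y)) (gword (phi0 v0) rest)"
      using kr(2) by (simp add: gword_append phi0_adm)
    also have "\<dots> = gsc (c1 * c2 * gsign (Ublk v0 y) (\<Union>x\<in>set rest. Ublk v0 x)) (gb (Ublk v0 y \<union> (\<Union>x\<in>set rest. Ublk v0 x)))"
      using disj by (simp add: gword_replicate c1 c2 gb_mul_sc)
    also have "Ublk v0 y \<union> (\<Union>x\<in>set rest. Ublk v0 x) = (\<Union>x\<in>set w. Ublk v0 x)"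
      using kr by (cases k) auto
    finally show ?thesis using c1(1) c2(1) by (intro exI[of _ "c1 * c2 * gsign (Ublk v0 y) (\<Union>x\<in>set rest. Ublk v0 x)"]) simp
  qed
qed

lemma K:
  assumes r: "r \<in> (TZ_Ecan :: ('a::field_char_0) fpoly set)"
    and g: "\<And>v. r v \<noteq> 0 \<Longrightarrow> sorted v \<and> good v"
  shows "r = (\<lambda>w. 0)"
proof (rule ccontr)
  assume "r \<noteq> (\<lambda>w. 0)"
  then obtain v0 where v0: "r v0 \<noteq> 0" by auto
  have rp: "r \<in> polys" using r by (simp add: TZ_Ecan_iff)
  define X where "X = set v0 \<union> (\<Union>w\<in>psupp r. set w)"
  have "finite X" using rp by (simp add: X_def polys_iff)
  then obtain xs where xs: "set xs = X" using finite_list by blast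
  have eq: "compall v0 xs r = psc (r v0) (mono v0)"
  proof
    fix w
    show "compall v0 xs r w = psc (r v0) (mono v0) w"
    proof (cases "w = v0")
      case True
      then show ?thesis by (simp add: compall_val psc_def mono_def)
    next
      case False
      have "r w = 0" if c: "\<forall>x\<in>set xs. count_list w x = count_list v0 x"
      proof (rule ccontr)
        assume rw: "r w \<noteq> 0"
        have "count_list w x = count_list v0 x" for x
        proof (cases "x \<in> X")
          case True
          then show ?thesis using c xs by auto
        next
          case False
          then have "x \<notin> set w" "x \<notin> set v0" using rw by (auto simp: X_def psupp_def)
          then show ?thesis by simp
        qed
        then have "mset w = mset v0" by (simp add: multiset_eq_iff count_mset)
        moreover have "sorted w" "sorted v0" using g rw v0 by auto
        ultimately have "w = v0" by (metis properties_for_sort sorted_sort_id)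
        then show False using False by simp
      qed
      then show ?thesis using False by (auto simp: compall_val psc_def mono_def)
    qed
  qed
  have "compall v0 xs r \<in> TZ_Ecan" by (rule compall_TZ[OF r])
  then have "evalE (psc (r v0) (mono v0)) (phi0 v0) = (\<lambda>S. 0)"
    unfolding eq by (simp add: TZ_Ecan_iff phi0_adm)
  then have z: "gsc (r v0) (gword (phi0 v0) v0) = (\<lambda>S. 0)"
    by (simp add: evalE_psc evalE_mono)
  have "sorted v0" "good v0" using g v0 by auto
  then obtain c :: 'a where c: "c \<noteq> 0" "gword (phi0 v0) v0 = gsc c (gb (\<Union>x\<in>set v0. Ublk v0 x))"
    using nv[of v0 v0] by auto
  have "gsc (r v0) (gword (phi0 v0) v0) (\<Union>x\<in>set v0. Ublk v0 x) = r v0 * c"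
    using c by (simp add: gsc_def gb_def)
  then show False using z v0 c(1) by (metis mult_eq_0_iff)
qed

theorem main:
  shows "(TZ_Ecan :: ('a::field_char_0) fpoly set) = TZ_generated gens_Ecan"
proof
  show "TZ_generated gens_Ecan \<subseteq> (TZ_Ecan :: 'a fpoly set)"
    unfolding TZ_generated_def using TZ_Ecan_ideal gens_TZ_Ecan by blast
next
  show "(TZ_Ecan :: 'a fpoly set) \<subseteq> TZ_generated gens_Ecan"
  proof
    fix p :: "'a fpoly" assume p: "p \<in> TZ_Ecan"
    have pp: "p \<in> polys" using p by (simp add: TZ_Ecan_iff)
    interpret E: gideal "TZ_Ecan :: 'a fpoly set"
      using TZ_Ecan_ideal gens_TZ_Ecan by unfold_locales (auto simp: TZ_ideal_def)
    have d: "pdiff p (nfp p) \<in> TZ_Ecan" by (rule E.reduce[OF pp])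
    have "pdiff p (pdiff p (nfp p)) \<in> TZ_Ecan" by (rule E.diff[OF p d])
    moreover have "pdiff p (pdiff p (nfp p)) = nfp p" by (simp add: pdiff_def)
    ultimately have "nfp p \<in> TZ_Ecan" by simp
    then have n0: "nfp p = (\<lambda>w. 0)" by (rule K) (rule nfp_supp)
    show "p \<in> TZ_generated gens_Ecan"
      unfolding TZ_generated_def
    proof
      fix I :: "'a fpoly set" assume "I \<in> {I. TZ_ideal I \<and> gens_Ecan \<subseteq> I}"
      then have "TZ_ideal I" "gens_Ecan \<subseteq> I" by auto
      then interpret gideal I by unfold_locales (auto simp: TZ_ideal_def)
      have "pdiff p (nfp p) \<in> I" by (rule reduce[OF pp])
      moreover have "pdiff p (nfp p) = p" by (simp add: n0 pdiff_def)
      ultimately show "p \<in> I" by simp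
    qed
  qed
qed


theorem mainTheorem1:
  shows "(TZ_Ecan :: ('a::field_char_0) fpoly set) = TZ_generated gens_Ecan"
  by (rule main)

end
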